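(* Status injective trees are status unique in trees: if $T$ is a tree whose vertices have pairwise distinct status values, and $T'$ is any tree with $\sigma(T')=\sigma(T)$, then $T'$ is isomorphic to $T$.
   Context: All graphs are finite, simple and connected. For a connected graph $G=(V,E)$ and $v\in V$, the status of $v$ is $s(v)=\sum_{u\in V} d(v,u)$, where $d$ is the shortest-path distance. The status sequence $\sigma(G)$ is the list of the statuses of all vertices of $G$ arranged in nondecreasing order. A connected graph is status injective if the statuses of its vertices are pairwise distinct. *)

theory Defs
  imports Main "HOL-Library.Multiset"
begin

definition simple_graph :: "'a set \<Rightarrow> 'a set set \<Rightarrow> bool" where
  "simple_graph V E \<longleftrightarrow> finite V \<and> (\<forall>e\<in>E. \<exists>u v. u \<in> V \<and> v \<in> V \<and> u \<noteq> v \<and> e = {u, v})"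

text \<open>A walk is a nonempty list of vertices with consecutive entries adjacent;
its length is the number of edges, i.e. length minus one.\<close>

definition walk :: "'a set \<Rightarrow> 'a set set \<Rightarrow> 'a list \<Rightarrow> bool" where
  "walk V E xs \<longleftrightarrow> xs \<noteq> [] \<and> set xs \<subseteq> V \<and>
     (\<forall>i. Suc i < length xs \<longrightarrow> {xs ! i, xs ! Suc i} \<in> E)"

definition connected_graph :: "'a set \<Rightarrow> 'a set set \<Rightarrow> bool" where
  "connected_graph V E \<longleftrightarrow> simple_graph V E \<and> V \<noteq> {} \<and>
     (\<forall>u\<in>V. \<forall>v\<in>V. \<exists>xs. walk V E xs \<and> hd xs = u \<and> last xs = v)"

definition is_cycle :: "'a set \<Rightarrow> 'a set set \<Rightarrow> 'a list \<Rightarrow> bool" where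
  "is_cycle V E xs \<longleftrightarrow> walk V E xs \<and> distinct xs \<and> length xs \<ge> 3 \<and> {last xs, hd xs} \<in> E"

definition is_tree :: "'a set \<Rightarrow> 'a set set \<Rightarrow> bool" where
  "is_tree V E \<longleftrightarrow> connected_graph V E \<and> \<not> (\<exists>xs. is_cycle V E xs)"

definition gdist :: "'a set \<Rightarrow> 'a set set \<Rightarrow> 'a \<Rightarrow> 'a \<Rightarrow> nat" where
  "gdist V E u v = (LEAST n. \<exists>xs. walk V E xs \<and> hd xs = u \<and> last xs = v \<and> length xs = Suc n)"

definition status :: "'a set \<Rightarrow> 'a set set \<Rightarrow> 'a \<Rightarrow> nat" where
  "status V E v = (\<Sum>u\<in>V. gdist V E v u)"

definition status_seq :: "'a set \<Rightarrow> 'a set set \<Rightarrow> nat list" where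
  "status_seq V E = sorted_list_of_multiset (image_mset (status V E) (mset_set V))"

definition status_injective :: "'a set \<Rightarrow> 'a set set \<Rightarrow> bool" where
  "status_injective V E \<longleftrightarrow> connected_graph V E \<and> inj_on (status V E) V"

definition graph_isomorphic :: "'a set \<Rightarrow> 'a set set \<Rightarrow> 'b set \<Rightarrow> 'b set set \<Rightarrow> bool" where
  "graph_isomorphic V E V' E' \<longleftrightarrow>
     (\<exists>f. bij_betw f V V' \<and> (\<forall>u\<in>V. \<forall>v\<in>V. {u, v} \<in> E \<longleftrightarrow> {f u, f v} \<in> E'))"

end

theory Submission
  imports Defs
begin

fun wk :: "'a set \<Rightarrow> 'a set set \<Rightarrow> 'a list \<Rightarrow> bool" where
  "wk V E [] = False"
| "wk V E [x] = (x \<in> V)"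
| "wk V E (x # y # xs) = (x \<in> V \<and> {x, y} \<in> E \<and> wk V E (y # xs))"

lemma walk_wk: "walk V E xs = wk V E xs"
proof (induction xs rule: wk.induct)
  case (1 V E)
  then show ?case by (simp add: walk_def)
next
  case (2 V E x)
  then show ?case by (simp add: walk_def)
next
  case (3 V E x y xs)
  have "(\<forall>i. Suc i < length (x # y # xs) \<longrightarrow> {(x # y # xs) ! i, (x # y # xs) ! Suc i} \<in> E)
     \<longleftrightarrow> {x, y} \<in> E \<and> (\<forall>i. Suc i < length (y # xs) \<longrightarrow> {(y # xs) ! i, (y # xs) ! Suc i} \<in> E)"
    (is "?L \<longleftrightarrow> ?R")
  proof
    assume ?L
    then show ?R by (metis Suc_less_eq length_Cons nth_Cons_0 nth_Cons_Suc zero_less_Suc)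
  next
    assume R: ?R
    show ?L
    proof (intro allI impI)
      fix i assume "Suc i < length (x # y # xs)"
      then show "{(x # y # xs) ! i, (x # y # xs) ! Suc i} \<in> E"
        using R by (cases i) auto
    qed
  qed
  then show ?case using 3 by (auto simp: walk_def)
qed

lemma wk_snoc: "wk V E xs \<Longrightarrow> b \<in> V \<Longrightarrow> {last xs, b} \<in> E \<Longrightarrow> wk V E (xs @ [b])"
  by (induction V E xs rule: wk.induct) auto

lemma wk_set: "wk V E xs \<Longrightarrow> set xs \<subseteq> V"
  by (induction V E xs rule: wk.induct) auto

lemma wk_Cons: "wk V E xs \<Longrightarrow> x \<in> V \<Longrightarrow> {x, hd xs} \<in> E \<Longrightarrow> wk V E (x # xs)"
  by (cases xs) auto

lemma wk_tl: "wk V E (x # y # xs) \<Longrightarrow> wk V E (y # xs)"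
  by simp

locale gr =
  fixes V :: "'a set" and E :: "'a set set"
  assumes conn: "connected_graph V E"
begin

abbreviation D where "D \<equiv> gdist V E"

lemma finV: "finite V"
  using conn by (simp add: connected_graph_def simple_graph_def)

lemma edge_in: assumes "{u, v} \<in> E" shows "u \<in> V" "v \<in> V" "u \<noteq> v"
proof -
  obtain a b where "a \<in> V" "b \<in> V" "a \<noteq> b" "{u, v} = {a, b}"
    using assms conn unfolding connected_graph_def simple_graph_def by blast
  then show "u \<in> V" "v \<in> V" "u \<noteq> v" by (auto simp: doubleton_eq_iff)
qed

lemma dist_wit: assumes "u \<in> V" "v \<in> V"
  shows "\<exists>xs. wk V E xs \<and> hd xs = u \<and> last xs = v \<and> length xs = Suc (D u v)"
proof -
  obtain xs where xs: "walk V E xs" "hd xs = u" "last xs = v"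
    using conn assms by (auto simp: connected_graph_def)
  then have "length xs = Suc (length xs - 1)" by (cases xs) (auto simp: walk_def)
  then have ex: "\<exists>n. \<exists>xs. walk V E xs \<and> hd xs = u \<and> last xs = v \<and> length xs = Suc n"
    using xs by blast
  show ?thesis using LeastI_ex[OF ex] unfolding gdist_def walk_wk by blast
qed

lemma dist_le: assumes "wk V E xs" "hd xs = u" "last xs = v"
  shows "D u v < length xs"
proof -
  have "length xs = Suc (length xs - 1)" using assms by (cases xs) auto
  then have "D u v \<le> length xs - 1" unfolding gdist_def
    by (metis (mono_tags, lifting) Least_le assms walk_wk)
  then show ?thesis using assms by (cases xs) auto
qed

lemma dist_self: "w \<in> V \<Longrightarrow> D w w = 0"
  using dist_le[of "[w]" w w] by simp

lemma dist_0: assumes "u \<in> V" "w \<in> V" "D u w = 0" shows "u = w"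
proof -
  obtain xs where "wk V E xs" "hd xs = u" "last xs = w" "length xs = Suc 0"
    using dist_wit[OF assms(1,2)] assms(3) by auto
  then show ?thesis by (cases xs) auto
qed

lemma G1: assumes "{u, v} \<in> E" "w \<in> V" shows "D u w \<le> Suc (D v w)"
proof -
  have V: "u \<in> V" "v \<in> V" using edge_in assms by auto
  obtain xs where xs: "wk V E xs" "hd xs = v" "last xs = w" "length xs = Suc (D v w)"
    using dist_wit[OF V(2) assms(2)] by auto
  have "wk V E (u # xs)" using wk_Cons[OF xs(1) V(1)] xs(2) assms(1) by simp
  moreover have "xs \<noteq> []" using xs(4) by auto
  ultimately have "D u w < length (u # xs)" using dist_le[of "u # xs" u w] xs by simp
  then show ?thesis using xs(4) by simp
qed

lemma G2: assumes "u \<in> V" "w \<in> V" "D u w = Suc k"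
  shows "\<exists>c. {u, c} \<in> E \<and> c \<in> V \<and> D c w = k"
proof -
  obtain xs where xs: "wk V E xs" "hd xs = u" "last xs = w" "length xs = Suc (Suc k)"
    using dist_wit[OF assms(1,2)] assms(3) by auto
  then obtain c ys where ys: "xs = u # c # ys"
    by (metis length_0_conv list.collapse list.sel(1) list.size(4) nat.distinct(1) neq_Nil_conv
        Suc_length_conv)
  have w2: "wk V E (c # ys)" "{u, c} \<in> E" using xs(1) ys by auto
  have "D c w < Suc k" using dist_le[OF w2(1)] xs ys by auto
  moreover have "D u w \<le> Suc (D c w)" using G1[OF w2(2) assms(2)] .
  ultimately have "D c w = k" using assms(3) by simp
  then show ?thesis using w2 edge_in by blast
qed

end


locale tr = gr +
  assumes acyc: "\<not> (\<exists>xs. is_cycle V E xs)"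
begin

lemma cyc: "wk V E xs \<Longrightarrow> distinct xs \<Longrightarrow> length xs \<ge> 3 \<Longrightarrow> {last xs, hd xs} \<in> E \<Longrightarrow> False"
  using acyc unfolding is_cycle_def walk_wk by blast

lemma Sp: assumes "w \<in> V"
  shows "\<forall>a b. a \<in> V \<longrightarrow> b \<in> V \<longrightarrow> a \<noteq> b \<longrightarrow> D a w = j \<longrightarrow> D b w = j \<longrightarrow>
    (\<exists>P. wk V E P \<and> distinct P \<and> hd P = a \<and> last P = b \<and> length P \<ge> 3 \<and> (\<forall>x\<in>set P. D x w \<le> j))"
proof (induction j)
  case 0
  then show ?case using dist_0 assms by metis
next
  case (Suc j)
  show ?case
  proof (intro allI impI)
    fix a b assume ab: "a \<in> V" "b \<in> V" "a \<noteq> b" "D a w = Suc j" "D b w = Suc j"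
    obtain a' where a': "{a, a'} \<in> E" "a' \<in> V" "D a' w = j" using G2 ab assms by blast
    obtain b' where b': "{b, b'} \<in> E" "b' \<in> V" "D b' w = j" using G2 ab assms by blast
    show "\<exists>P. wk V E P \<and> distinct P \<and> hd P = a \<and> last P = b \<and> 3 \<le> length P \<and> (\<forall>x\<in>set P. D x w \<le> Suc j)"
    proof (cases "a' = b'")
      case True
      have "{a', b} \<in> E" using b' True by (simp add: insert_commute)
      then have "wk V E [a, a', b]" using a' ab by simp
      moreover have "distinct [a, a', b]" using ab a' b' True by auto
      ultimately show ?thesis using ab a' by (intro exI[of _ "[a, a', b]"]) auto
    next
      case False
      obtain Q where Q: "wk V E Q" "distinct Q" "hd Q = a'" "last Q = b'" "3 \<le> length Q"
          "\<forall>x\<in>set Q. D x w \<le> j"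
        using Suc.IH a' b' False by blast
      have "wk V E (Q @ [b])" using wk_snoc[OF Q(1)] ab b' Q(4) by (simp add: insert_commute)
      moreover have "hd (Q @ [b]) = a'" using Q(3,5) by (cases Q) auto
      ultimately have "wk V E (a # Q @ [b])" using wk_Cons[of V E "Q @ [b]" a] ab a' by auto
      moreover have "distinct (a # Q @ [b])" using Q ab by fastforce
      moreover have "\<forall>x\<in>set (a # Q @ [b]). D x w \<le> Suc j" using Q ab by auto
      ultimately show ?thesis using Q by (intro exI[of _ "a # Q @ [b]"]) auto
    qed
  qed
qed

lemma T1: assumes "{u, v} \<in> E" "w \<in> V" shows "D u w \<noteq> D v w"
proof
  assume eq: "D u w = D v w"
  have uv: "u \<in> V" "v \<in> V" "u \<noteq> v" using edge_in assms by auto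
  obtain P where "wk V E P" "distinct P" "hd P = u" "last P = v" "3 \<le> length P"
    using Sp[OF assms(2), of "D u w"] uv eq by (metis (no_types, lifting))
  then show False using cyc assms(1) by (metis insert_commute)
qed

lemma T2: assumes "{y, x} \<in> E" "{y, z} \<in> E" "x \<noteq> z" "w \<in> V"
    "D x w < D y w" "D z w < D y w"
  shows False
proof -
  have V: "x \<in> V" "y \<in> V" "z \<in> V" using edge_in assms by auto
  have "D y w \<le> Suc (D x w)" "D y w \<le> Suc (D z w)"
    using G1 assms by auto
  then have eq: "D x w = D z w" "D y w = Suc (D x w)" using assms by auto
  obtain P where P: "wk V E P" "distinct P" "hd P = x" "last P = z" "3 \<le> length P"
     "\<forall>a\<in>set P. D a w \<le> D x w"
    using Sp[OF assms(4), of "D x w"] V eq assms(3) by metis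
  have "y \<notin> set P" using P(6) eq by fastforce
  have "wk V E (y # P)" using wk_Cons[OF P(1) V(2)] P(3) assms(1) by simp
  moreover have "distinct (y # P)" using P(2) \<open>y \<notin> set P\<close> by simp
  moreover have "{last (y # P), hd (y # P)} \<in> E" using P(4,5) assms(2)
    by (auto simp: insert_commute)
  ultimately show False using cyc P(5) by fastforce
qed

definition A where "A u v = {w \<in> V. D u w < D v w}"

lemma finA: "finite (A u v)" using finV by (simp add: A_def)

lemma edge_step: assumes "{u, v} \<in> E" "w \<in> V"
  shows "D v w = Suc (D u w) \<or> D u w = Suc (D v w)"
proof -
  have "{v, u} \<in> E" using assms by (simp add: insert_commute)
  then show ?thesis using G1[OF assms] G1[OF \<open>{v,u} \<in> E\<close> assms(2)] T1[OF assms] by linarith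
qed

lemma A_part: assumes "{u, v} \<in> E"
  shows "card (A u v) + card (A v u) = card V"
proof -
  have "A u v \<union> A v u = V" "A u v \<inter> A v u = {}"
    using T1[OF assms] by (auto simp: A_def) (meson linorder_neqE_nat)
  then show ?thesis using card_Un_disjoint[OF finA finA, of u v v u] by simp
qed

lemma cardA_sum: "card (A u v) = (\<Sum>w\<in>V. if D u w < D v w then 1 else 0)"
  unfolding A_def using sum.inter_filter[OF finV, of "\<lambda>_. 1::nat" "\<lambda>w. D u w < D v w"] by simp

lemma S1: assumes "{u, v} \<in> E"
  shows "status V E u + card (A u v) = status V E v + card (A v u)"
proof -
  have "(\<Sum>w\<in>V. D u w + (if D u w < D v w then 1 else 0)) = (\<Sum>w\<in>V. D v w + (if D v w < D u w then 1 else 0))"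
  proof (rule sum.cong)
    fix w assume "w \<in> V"
    then show "D u w + (if D u w < D v w then 1 else 0) = D v w + (if D v w < D u w then 1 else 0)"
      using edge_step[OF assms, of w] by auto
  qed simp
  then show ?thesis unfolding status_def cardA_sum sum.distrib by simp
qed

lemma contain: assumes "{x, y} \<in> E" "{y, z} \<in> E" "x \<noteq> z" "w \<in> A x y"
  shows "w \<in> A y z"
proof -
  have w: "w \<in> V" "D x w < D y w" using assms(4) by (auto simp: A_def)
  have "D z w \<noteq> D y w" using T1[OF assms(2) w(1)] by simp
  moreover have "\<not> D z w < D y w"
    using T2[of y x z w] assms w by (auto simp: insert_commute)
  ultimately show ?thesis using w by (auto simp: A_def)
qed

definition Nb where "Nb u v = {c \<in> V. {u, c} \<in> E \<and> c \<noteq> v}"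

lemma decomp: assumes "{u, v} \<in> E"
  shows "A u v = insert u (\<Union>c\<in>Nb u v. A c u)"
proof
  have V: "u \<in> V" "v \<in> V" "u \<noteq> v" using edge_in assms by auto
  show "insert u (\<Union>c\<in>Nb u v. A c u) \<subseteq> A u v"
  proof
    fix w assume "w \<in> insert u (\<Union>c\<in>Nb u v. A c u)"
    then consider "w = u" | c where "c \<in> Nb u v" "w \<in> A c u" by blast
    then show "w \<in> A u v"
    proof cases
      case 1
      then show ?thesis using V dist_self dist_0[of v u] by (auto simp: A_def)
    next
      case 2
      then show ?thesis using contain[of c u v w] assms by (auto simp: Nb_def insert_commute)
    qed
  qed
  show "A u v \<subseteq> insert u (\<Union>c\<in>Nb u v. A c u)"
  proof
    fix w assume w: "w \<in> A u v"
    show "w \<in> insert u (\<Union>c\<in>Nb u v. A c u)"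
    proof (cases "w = u")
      case False
      have wV: "w \<in> V" "D u w < D v w" using w by (auto simp: A_def)
      then obtain k where k: "D u w = Suc k" using dist_0[OF V(1) wV(1)] False
        by (metis not0_implies_Suc)
      obtain c where c: "{u, c} \<in> E" "c \<in> V" "D c w = k" using G2[OF V(1) wV(1) k] by blast
      have "c \<noteq> v" using c k wV by auto
      then have "c \<in> Nb u v" "w \<in> A c u" using c k wV by (auto simp: Nb_def A_def)
      then show ?thesis by blast
    qed simp
  qed
qed

lemma decomp_card: assumes "{u, v} \<in> E"
  shows "card (A u v) = Suc (\<Sum>c\<in>Nb u v. card (A c u))"
proof -
  have finN: "finite (Nb u v)" using finV by (simp add: Nb_def)
  have disj: "\<forall>c1\<in>Nb u v. \<forall>c2\<in>Nb u v. c1 \<noteq> c2 \<longrightarrow> A c1 u \<inter> A c2 u = {}"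
  proof (intro ballI impI)
    fix c1 c2 assume "c1 \<in> Nb u v" "c2 \<in> Nb u v" "c1 \<noteq> c2"
    then show "A c1 u \<inter> A c2 u = {}"
      using T2[of u c1 c2] by (auto simp: Nb_def A_def)
  qed
  have "u \<in> V" using edge_in assms by auto
  then have "u \<notin> (\<Union>c\<in>Nb u v. A c u)" by (auto simp: A_def dist_self)
  then have "card (A u v) = Suc (card (\<Union>c\<in>Nb u v. A c u))"
    using decomp[OF assms] finA finN by (simp add: card_insert_disjoint)
  also have "card (\<Union>c\<in>Nb u v. A c u) = (\<Sum>c\<in>Nb u v. card (A c u))"
    using card_UN_disjoint[OF finN _ disj] finA by blast
  finally show ?thesis .
qed

end


locale itr = tr +
  assumes inj: "inj_on (status V E) V"
begin

abbreviation s where "s \<equiv> status V E"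
abbreviation n where "n \<equiv> card V"

definition sn where "sn u c \<longleftrightarrow> c \<in> V \<and> {u, c} \<in> E \<and> s c < s u"

lemma big: assumes "{c, u} \<in> E" "s c < s u" shows "n < 2 * card (A c u)"
  using S1[OF assms(1)] A_part[OF assms(1)] assms(2) by linarith

lemma sn_uniq: assumes "sn u c1" "sn u c2" shows "c1 = c2"
proof (rule ccontr)
  assume ne: "c1 \<noteq> c2"
  have e: "{c1, u} \<in> E" "{c2, u} \<in> E" using assms by (auto simp: sn_def insert_commute)
  have b: "n < 2 * card (A c1 u)" "n < 2 * card (A c2 u)"
    using big e assms by (auto simp: sn_def)
  have "A c1 u \<inter> A c2 u = {}"
    using T2[of u c1 c2] assms ne by (auto simp: sn_def A_def)
  then have "card (A c1 u) + card (A c2 u) = card (A c1 u \<union> A c2 u)"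
    using card_Un_disjoint[OF finA finA] by simp
  also have "\<dots> \<le> n" using finV by (intro card_mono) (auto simp: A_def)
  finally show False using b by linarith
qed

lemma S3: assumes "u \<in> V" "\<not> (\<exists>c. sn u c)" "w \<in> V" "w \<noteq> u"
  shows "s u < s w"
proof -
  have P: "\<forall>y z. y \<in> V \<longrightarrow> z \<in> V \<longrightarrow> D y u = k \<longrightarrow> {y, z} \<in> E \<longrightarrow> D z u = Suc k \<longrightarrow>
     n < 2 * card (A y z) \<and> s u < s z" for k
  proof (induction k)
    case 0
    show ?case
    proof (intro allI impI)
      fix y z assume yz: "y \<in> V" "z \<in> V" "D y u = 0" "{y, z} \<in> E" "D z u = Suc 0"
      have "y = u" using dist_0 yz assms by blast
      have "z \<noteq> u" using yz assms dist_self by auto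
      then have "s z \<noteq> s u" using inj yz assms by (auto dest: inj_onD)
      moreover have "\<not> s z < s u" using assms(2) yz \<open>y = u\<close> by (auto simp: sn_def)
      ultimately have "s u < s z" by simp
      then show "n < 2 * card (A y z) \<and> s u < s z" using big[of y z] yz \<open>y = u\<close> by simp
    qed
  next
    case (Suc k)
    show ?case
    proof (intro allI impI)
      fix y z assume yz: "y \<in> V" "z \<in> V" "D y u = Suc k" "{y, z} \<in> E" "D z u = Suc (Suc k)"
      obtain x where x: "{y, x} \<in> E" "x \<in> V" "D x u = k" using G2 yz assms by blast
      have IH: "n < 2 * card (A x y)" "s u < s y"
        using Suc.IH x yz by (auto simp: insert_commute)
      have "x \<noteq> z" using x yz by auto
      then have "A x y \<subseteq> A y z" using contain[of x y z] x yz by (auto simp: insert_commute)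
      then have "card (A x y) \<le> card (A y z)" using finA by (intro card_mono)
      then have "n < 2 * card (A y z)" using IH by linarith
      then have "s y < s z" using S1[OF yz(4)] A_part[OF yz(4)] by linarith
      then show "n < 2 * card (A y z) \<and> s u < s z" using IH \<open>n < 2 * card (A y z)\<close> by simp
    qed
  qed
  obtain k where k: "D w u = Suc k" using dist_0[OF assms(3,1)] assms(4) by (metis not0_implies_Suc)
  obtain y where y: "{w, y} \<in> E" "y \<in> V" "D y u = k" using G2[OF assms(3,1) k] by blast
  show ?thesis using P[of k] y k assms by (auto simp: insert_commute)
qed

definition r where "r = (SOME r. r \<in> V \<and> (\<forall>v\<in>V. s r \<le> s v))"

lemma r_prop: "r \<in> V" "\<And>v. v \<in> V \<Longrightarrow> s r \<le> s v"
proof -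
  have ne: "V \<noteq> {}" using conn by (simp add: connected_graph_def)
  have "\<exists>r. r \<in> V \<and> (\<forall>v\<in>V. s r \<le> s v)"
  proof -
    obtain m where "m \<in> s ` V" "\<forall>x\<in>s ` V. m \<le> x"
      using Min_in[of "s ` V"] Min_le[of "s ` V"] finV ne by blast
    then show ?thesis by blast
  qed
  then have "r \<in> V \<and> (\<forall>v\<in>V. s r \<le> s v)" unfolding r_def by (rule someI_ex)
  then show "r \<in> V" "\<And>v. v \<in> V \<Longrightarrow> s r \<le> s v" by auto
qed

lemma r_nosn: "\<not> sn r c"
  using r_prop by (metis leD sn_def)

lemma has_sn: assumes "u \<in> V" "u \<noteq> r" shows "\<exists>c. sn u c"
  using S3[OF assms(1) _ r_prop(1)] r_prop(2)[OF assms(1)] assms(2) by fastforce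

definition p where "p u = (THE c. sn u c)"

lemma p_sn: assumes "u \<in> V" "u \<noteq> r" shows "sn u (p u)"
proof -
  obtain c where "sn u c" using has_sn assms by blast
  then show ?thesis unfolding p_def using sn_uniq by (metis theI)
qed

lemma p_eq: "sn u c \<Longrightarrow> p u = c"
  unfolding p_def using sn_uniq by blast

lemma p_props: assumes "u \<in> V" "u \<noteq> r"
  shows "p u \<in> V" "{u, p u} \<in> E" "s (p u) < s u"
  using p_sn[OF assms] by (auto simp: sn_def)

lemma edge_iff: assumes "a \<in> V" "b \<in> V"
  shows "{a, b} \<in> E \<longleftrightarrow> (a \<noteq> r \<and> p a = b) \<or> (b \<noteq> r \<and> p b = a)"
proof
  assume e: "{a, b} \<in> E"
  then have "a \<noteq> b" using edge_in by auto
  then have "s a \<noteq> s b" using inj assms by (auto dest: inj_onD)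
  then consider "s b < s a" | "s a < s b" by linarith
  then show "(a \<noteq> r \<and> p a = b) \<or> (b \<noteq> r \<and> p b = a)"
  proof cases
    case 1
    then have "sn a b" using e assms by (simp add: sn_def)
    then show ?thesis using r_nosn p_eq by blast
  next
    case 2
    then have "sn b a" using e assms by (simp add: sn_def insert_commute)
    then show ?thesis using r_nosn p_eq by blast
  qed
next
  assume "(a \<noteq> r \<and> p a = b) \<or> (b \<noteq> r \<and> p b = a)"
  then show "{a, b} \<in> E" using p_props assms by (auto simp: insert_commute)
qed

definition ch where "ch u = {c \<in> V. c \<noteq> r \<and> p c = u}"
definition N where "N u = card (A u (p u))"

lemma fin_ch: "finite (ch u)" using finV by (simp add: ch_def)

lemma Nb_ch: assumes "u \<in> V" "u \<noteq> r" shows "Nb u (p u) = ch u"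
proof
  show "Nb u (p u) \<subseteq> ch u"
  proof
    fix c assume c: "c \<in> Nb u (p u)"
    then have e: "c \<in> V" "{u, c} \<in> E" "c \<noteq> p u" by (auto simp: Nb_def)
    then have "c \<noteq> u" using edge_in by blast
    then have "s c \<noteq> s u" using inj e assms by (auto dest: inj_onD)
    moreover have "\<not> s c < s u"
    proof
      assume "s c < s u"
      then have "sn u c" using e by (simp add: sn_def)
      then show False using p_eq e by blast
    qed
    ultimately have "sn c u" using e assms by (simp add: sn_def insert_commute)
    then show "c \<in> ch u" using r_nosn p_eq e by (auto simp: ch_def)
  qed
  show "ch u \<subseteq> Nb u (p u)"
  proof
    fix c assume "c \<in> ch u"
    then have c: "c \<in> V" "c \<noteq> r" "p c = u" by (auto simp: ch_def)
    then show "c \<in> Nb u (p u)" using p_props[OF c(1,2)] p_props[OF assms]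
      by (auto simp: Nb_def insert_commute)
  qed
qed

lemma N_rec: assumes "u \<in> V" "u \<noteq> r" shows "N u = Suc (\<Sum>c\<in>ch u. N c)"
proof -
  have "N u = Suc (\<Sum>c\<in>ch u. card (A c u))"
    using decomp_card[OF p_props(2)[OF assms]] Nb_ch[OF assms] by (simp add: N_def)
  also have "(\<Sum>c\<in>ch u. card (A c u)) = (\<Sum>c\<in>ch u. N c)"
    by (rule sum.cong) (auto simp: ch_def N_def)
  finally show ?thesis .
qed

lemma N_stat: assumes "u \<in> V" "u \<noteq> r" shows "s (p u) + n = s u + 2 * N u"
  using S1[OF p_props(2)[OF assms]] A_part[OF p_props(2)[OF assms]] unfolding N_def by linarith

end


lemma main:
  fixes V :: "'a set" and E :: "'a set set" and V' :: "'b set" and E' :: "'b set set"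
  assumes "itr V E" "itr V' E'" "card V' = card V" "status V' E' ` V' = status V E ` V"
  shows "graph_isomorphic V' E' V E"
proof -
  interpret T: itr V E by fact
  interpret T': itr V' E' by fact
  define ph where "ph a = inv_into V T.s (T'.s a)" for a
  have ph: "ph a \<in> V" "T.s (ph a) = T'.s a" if "a \<in> V'" for a
  proof -
    have "T'.s a \<in> T.s ` V" using that assms(4) by blast
    then show "ph a \<in> V" "T.s (ph a) = T'.s a" unfolding ph_def
      by (auto intro: inv_into_into f_inv_into_f)
  qed
  have inj: "inj_on ph V'"
  proof (rule inj_onI)
    fix a b assume "a \<in> V'" "b \<in> V'" "ph a = ph b"
    then show "a = b" using ph T'.inj by (metis inj_onD)
  qed
  have img: "ph ` V' = V"
  proof (rule card_subset_eq[OF T.finV])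
    show "ph ` V' \<subseteq> V" using ph by auto
    show "card (ph ` V') = card V" using card_image[OF inj] assms(3) by simp
  qed
  have bij: "bij_betw ph V' V" using inj img by (simp add: bij_betw_def)
  have phr: "ph T'.r = T.r"
  proof -
    have a: "T.s (ph T'.r) = T'.s T'.r" using ph T'.r_prop by blast
    obtain b where b: "b \<in> V'" "T'.s b = T.s T.r" using assms(4) T.r_prop(1) by force
    have "T.s T.r \<le> T.s (ph T'.r)" using T.r_prop ph T'.r_prop by blast
    moreover have "T'.s T'.r \<le> T'.s b" using T'.r_prop b by blast
    ultimately have "T.s (ph T'.r) = T.s T.r" using a b by linarith
    then show ?thesis using T.inj ph T'.r_prop T.r_prop by (metis inj_onD)
  qed
  have phne: "ph a \<noteq> T.r" if "a \<in> V'" "a \<noteq> T'.r" for a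
    using inj that phr T'.r_prop(1) by (metis inj_onD)
  define B where "B = Suc (Max (T'.s ` V'))"
  have sB: "T'.s c < B" if "c \<in> V'" for c
    using that T'.finV unfolding B_def by (simp add: le_imp_less_Suc)
  have key: "a \<in> V' \<longrightarrow> a \<noteq> T'.r \<longrightarrow> ph (T'.p a) = T.p (ph a) \<and> T'.N a = T.N (ph a)" for a
  proof (induction a rule: measure_induct_rule[of "\<lambda>a. B - T'.s a"])
    case (less a)
    show ?case
    proof (intro impI)
      assume a: "a \<in> V'" "a \<noteq> T'.r"
      define u where "u = ph a"
      have u: "u \<in> V" "u \<noteq> T.r" "T.s u = T'.s a" using ph phne a by (auto simp: u_def)
      have IH: "ph (T'.p c) = T.p (ph c) \<and> T'.N c = T.N (ph c)"
        if "c \<in> V'" "c \<noteq> T'.r" "T'.s a < T'.s c" for c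
      proof -
        have "B - T'.s c < B - T'.s a" using that sB[OF that(1)] by linarith
        then show ?thesis using less that by blast
      qed
      have chm: "ph ` T'.ch a = T.ch u"
      proof
        show "ph ` T'.ch a \<subseteq> T.ch u"
        proof
          fix d assume "d \<in> ph ` T'.ch a"
          then obtain c where c: "c \<in> V'" "c \<noteq> T'.r" "T'.p c = a" "d = ph c"
            by (auto simp: T'.ch_def)
          have "T'.s a < T'.s c" using T'.p_props c by blast
          then have "T.p d = u" using IH[OF c(1,2)] c(3,4) by (simp add: u_def)
          then show "d \<in> T.ch u" using c ph phne by (auto simp: T.ch_def)
        qed
        show "T.ch u \<subseteq> ph ` T'.ch a"
        proof
          fix d assume "d \<in> T.ch u"
          then have d: "d \<in> V" "d \<noteq> T.r" "T.p d = u" by (auto simp: T.ch_def)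
          obtain c where c: "c \<in> V'" "ph c = d" using img d by auto
          have cr: "c \<noteq> T'.r" using c d phr by auto
          have "T'.s a < T'.s c" using T.p_props[OF d(1,2)] d c u ph by metis
          then have "ph (T'.p c) = ph a" using IH c cr d by (simp add: u_def)
          then have "T'.p c = a" using inj T'.p_props[OF c(1) cr] a by (metis inj_onD)
          then show "d \<in> ph ` T'.ch a" using c cr by (auto simp: T'.ch_def)
        qed
      qed
      have inj2: "inj_on ph (T'.ch a)" using inj by (rule inj_on_subset) (auto simp: T'.ch_def)
      have "(\<Sum>d\<in>T.ch u. T.N d) = (\<Sum>c\<in>T'.ch a. T.N (ph c))"
        using sum.reindex[OF inj2, of T.N] chm by simp
      also have "\<dots> = (\<Sum>c\<in>T'.ch a. T'.N c)"
      proof (rule sum.cong)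
        fix c assume "c \<in> T'.ch a"
        then have c: "c \<in> V'" "c \<noteq> T'.r" "T'.p c = a" by (auto simp: T'.ch_def)
        have "T'.s a < T'.s c" using T'.p_props c by blast
        then show "T.N (ph c) = T'.N c" using IH c by simp
      qed simp
      finally have Neq: "T'.N a = T.N u" using T.N_rec[OF u(1,2)] T'.N_rec[OF a] by simp
      have "T'.s (T'.p a) + card V' = T'.s a + 2 * T'.N a" using T'.N_stat[OF a] .
      moreover have "T.s (T.p u) + card V = T.s u + 2 * T.N u" using T.N_stat[OF u(1,2)] .
      ultimately have "T'.s (T'.p a) = T.s (T.p u)" using Neq u(3) assms(3) by linarith
      then have "T.s (ph (T'.p a)) = T.s (T.p u)" using ph T'.p_props[OF a] by simp
      then have "ph (T'.p a) = T.p u"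
        using T.inj ph T'.p_props[OF a] T.p_props[OF u(1,2)] by (metis inj_onD)
      then show "ph (T'.p a) = T.p (ph a) \<and> T'.N a = T.N (ph a)" using Neq by (simp add: u_def)
    qed
  qed
  have "\<forall>a\<in>V'. \<forall>b\<in>V'. {a, b} \<in> E' \<longleftrightarrow> {ph a, ph b} \<in> E"
  proof (intro ballI)
    fix a b assume ab: "a \<in> V'" "b \<in> V'"
    have 1: "(a \<noteq> T'.r \<and> T'.p a = b) \<longleftrightarrow> (ph a \<noteq> T.r \<and> T.p (ph a) = ph b)"
      if "a \<in> V'" "b \<in> V'" for a b
    proof
      assume "a \<noteq> T'.r \<and> T'.p a = b"
      then show "ph a \<noteq> T.r \<and> T.p (ph a) = ph b" using key that phne by metis
    next
      assume h: "ph a \<noteq> T.r \<and> T.p (ph a) = ph b"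
      then have ar: "a \<noteq> T'.r" using phr by auto
      then have "ph (T'.p a) = ph b" using key that h by metis
      then show "a \<noteq> T'.r \<and> T'.p a = b" using inj T'.p_props[OF that(1) ar] that ar
        by (metis inj_onD)
    qed
    show "{a, b} \<in> E' \<longleftrightarrow> {ph a, ph b} \<in> E"
      using T'.edge_iff[OF ab] T.edge_iff[OF ph(1)[OF ab(1)] ph(1)[OF ab(2)]] 1[OF ab] 1[OF ab(2,1)]
      by blast
  qed
  then show ?thesis using bij unfolding graph_isomorphic_def by blast
qed


lemma mk_itr: assumes "is_tree V E" "inj_on (status V E) V" shows "itr V E"
  using assms unfolding is_tree_def itr_def itr_axioms_def tr_def tr_axioms_def gr_def by blast

theorem theorem3p1:
  fixes V :: "'a set" and E :: "'a set set" and V' :: "'b set" and E' :: "'b set set"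
  assumes "is_tree V E"
    and "status_injective V E"
    and "is_tree V' E'"
    and "status_seq V' E' = status_seq V E"
  shows "graph_isomorphic V' E' V E"
proof -
  have fin: "finite V" "finite V'" using assms(1,3)
    by (auto simp: is_tree_def connected_graph_def simple_graph_def)
  have inj: "inj_on (status V E) V" using assms(2) by (simp add: status_injective_def)
  have M: "image_mset (status V' E') (mset_set V') = image_mset (status V E) (mset_set V)"
    using arg_cong[OF assms(4), of mset] by (simp add: status_seq_def)
  have img: "status V' E' ` V' = status V E ` V"
    using arg_cong[OF M, of set_mset] fin by simp
  have crd: "card V' = card V"
    using arg_cong[OF M, of size] by simp
  have "card (status V' E' ` V') = card V'"
    using img crd card_image[OF inj] by simp
  then have inj': "inj_on (status V' E') V'" using fin(2) by (rule eq_card_imp_inj_on[rotated])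
  show ?thesis
    by (rule main[OF mk_itr[OF assms(1) inj] mk_itr[OF assms(3) inj'] crd img])
qed

end
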